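(* Let $n\ge 3$. Let $T_n$ be the set of two-layer comparator networks on $n$ channels that have at least one comparator in the second layer and in which no comparator $(i,j)$ occurs in both layers. Let $R(T'_n)\subseteq T_n$ be any set of representatives of $T_n$ modulo the equivalence relation generated by (i) permutation of channels followed by untangling and (ii) reflection. Then $R(T'_n)$ is a complete set of prefixes for the search of optimal sorting networks in size and depth: for all $d\ge 2$ and $s\ge 0$, if there exists a sorting network on $n$ channels with at most $d$ layers and at most $s$ comparators, then there exists a sorting network on $n$ channels with at most $d$ layers and at most $s$ comparators whose first two layers form a network belonging to $R(T'_n)$.
   Context: A comparator network on $n$ channels is a finite sequence of comparators $(i,j)$ with $1\le i<j\le n$. A comparator $(i,j)$ replaces the values $(x_i,x_j)$ on channels $i,j$ by $(\min(x_i,x_j),\max(x_i,x_j))$. A layer is a set of comparators acting on pairwise disjoint channels. A network is presented as a sequence of layers, and its depth is the number of layers. A sorting network is a comparator network whose output is sorted (nondecreasing from channel $1$ to $n$) for every input. A two-layer network is a network consisting of exactly two layers; either layer may be empty. Permutation and untangling. Given a permutation $\pi$ of the channels, $\pi(C)$ is the network obtained by replacing each comparator $(i,j)$ by a generalized comparator that puts the minimum on channel $\pi(i)$ and the maximum on channel $\pi(j)$. Untangling turns such a generalized network into a standard one. Process the generalized comparators in order. Whenever one puts the minimum on channel $a$ and the maximum on channel $b$ with $a>b$, replace it by the standard comparator $(b,a)$ and exchange the channel labels $a$ and $b$ in all subsequent comparators. Two networks $C,C'$ are equivalent up to permutation if $C'$ equals the untangling of $\pi(C)$ for some permutation $\pi$.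 Reflection. The reflection of a network $C$ on $n$ channels replaces each comparator $(i,j)$ by $(n-j+1,n-i+1)$. *)

theory Defs
  imports Main "HOL-Library.Product_Lexorder"
begin

(* Channels are natural numbers 1..n. *)

type_synonym comp = "nat \<times> nat"
type_synonym layer = "comp set"
type_synonym network = "layer list"

definition is_layer :: "nat \<Rightarrow> layer \<Rightarrow> bool" where
  "is_layer n L \<longleftrightarrow> finite L \<and>
     (\<forall>(i,j)\<in>L. 1 \<le> i \<and> i < j \<and> j \<le> n) \<and>
     (\<forall>c\<in>L. \<forall>c'\<in>L. c \<noteq> c' \<longrightarrow> {fst c, snd c} \<inter> {fst c', snd c'} = {})"

definition is_network :: "nat \<Rightarrow> network \<Rightarrow> bool" where
  "is_network n C \<longleftrightarrow> (\<forall>L\<in>set C. is_layer n L)"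

definition depth :: "network \<Rightarrow> nat" where
  "depth C = length C"

definition net_size :: "network \<Rightarrow> nat" where
  "net_size C = sum_list (map card C)"

definition apply_comp :: "comp \<Rightarrow> (nat \<Rightarrow> int) \<Rightarrow> (nat \<Rightarrow> int)" where
  "apply_comp c x = (case c of (i,j) \<Rightarrow> x(i := min (x i) (x j), j := max (x i) (x j)))"

(* comparators of a layer act on disjoint channels, so the order is irrelevant *)
definition apply_layer :: "layer \<Rightarrow> (nat \<Rightarrow> int) \<Rightarrow> (nat \<Rightarrow> int)" where
  "apply_layer L x = fold apply_comp (sorted_list_of_set L) x"

definition apply_net :: "network \<Rightarrow> (nat \<Rightarrow> int) \<Rightarrow> (nat \<Rightarrow> int)" where
  "apply_net C x = fold apply_layer C x"

definition sorting_network :: "nat \<Rightarrow> network \<Rightarrow> bool" where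
  "sorting_network n C \<longleftrightarrow> is_network n C \<and>
     (\<forall>x. \<forall>i j. 1 \<le> i \<longrightarrow> i \<le> j \<longrightarrow> j \<le> n \<longrightarrow> apply_net C x i \<le> apply_net C x j)"

definition T_set :: "nat \<Rightarrow> network set" where
  "T_set n = {C. is_network n C \<and> length C = 2 \<and> C ! 1 \<noteq> {} \<and> C ! 0 \<inter> C ! 1 = {}}"

(* untangling a sequence of generalized comparators (min to a, max to b) *)
definition sw :: "nat \<Rightarrow> nat \<Rightarrow> nat \<Rightarrow> nat" where
  "sw a b k = (if k = a then b else if k = b then a else k)"

function untangle_seq :: "comp list \<Rightarrow> comp list" where
  "untangle_seq [] = []"
| "untangle_seq ((a,b) # cs) =
     (if b < a then (b,a) # untangle_seq (map (\<lambda>(c,d). (sw a b c, sw a b d)) cs)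
      else (a,b) # untangle_seq cs)"
  by pat_completeness auto
termination by (relation "measure length") auto

fun regroup :: "nat list \<Rightarrow> 'a list \<Rightarrow> 'a list list" where
  "regroup [] xs = []"
| "regroup (k # ks) xs = take k xs # regroup ks (drop k xs)"

definition untangle_net :: "network \<Rightarrow> network" where
  "untangle_net G = map set (regroup (map card G) (untangle_seq (concat (map sorted_list_of_set G))))"

definition perm_net :: "(nat \<Rightarrow> nat) \<Rightarrow> network \<Rightarrow> network" where
  "perm_net \<pi> C = map (\<lambda>L. (\<lambda>(i,j). (\<pi> i, \<pi> j)) ` L) C"

definition reflect_net :: "nat \<Rightarrow> network \<Rightarrow> network" where
  "reflect_net n C = map (\<lambda>L. (\<lambda>(i,j). (n - j + 1, n - i + 1)) ` L) C"

definition sym_step :: "nat \<Rightarrow> network \<Rightarrow> network \<Rightarrow> bool" where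
  "sym_step n C C' \<longleftrightarrow> C \<in> T_set n \<and> C' \<in> T_set n \<and>
     ((\<exists>\<pi>. bij_betw \<pi> {1..n} {1..n} \<and> C' = untangle_net (perm_net \<pi> C)) \<or> C' = reflect_net n C)"

definition T_equiv :: "nat \<Rightarrow> network \<Rightarrow> network \<Rightarrow> bool" where
  "T_equiv n = (symclp (sym_step n))\<^sup>*\<^sup>*"

definition is_representatives :: "nat \<Rightarrow> network set \<Rightarrow> bool" where
  "is_representatives n R \<longleftrightarrow> R \<subseteq> T_set n \<and>
     (\<forall>C\<in>T_set n. \<exists>C'\<in>R. T_equiv n C C') \<and>
     (\<forall>C1\<in>R. \<forall>C2\<in>R. T_equiv n C1 C2 \<longrightarrow> C1 = C2)"

end

theory Submission
  imports Defs "HOL-Library.Multiset"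
begin


definition glayer :: "nat \<Rightarrow> layer \<Rightarrow> bool" where
  "glayer n L \<longleftrightarrow> finite L \<and> (\<forall>(a,b)\<in>L. a \<in> {1..n} \<and> b \<in> {1..n} \<and> a \<noteq> b) \<and>
     (\<forall>c\<in>L. \<forall>c'\<in>L. c \<noteq> c' \<longrightarrow> {fst c, snd c} \<inter> {fst c', snd c'} = {})"

definition isperm :: "nat \<Rightarrow> (nat \<Rightarrow> nat) \<Rightarrow> bool" where
  "isperm n s \<longleftrightarrow> bij s \<and> (\<forall>k. (s k \<in> {1..n}) = (k \<in> {1..n}))"

definition pm :: "(nat \<Rightarrow> nat) \<Rightarrow> comp \<Rightarrow> comp" where
  "pm s c = (s (fst c), s (snd c))"

lemma is_layer_glayer: "is_layer n L \<Longrightarrow> glayer n L"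
  unfolding is_layer_def glayer_def by fastforce

lemma comp_commute:
  assumes "{fst c, snd c} \<inter> {fst c', snd c'} = {}"
  shows "apply_comp c \<circ> apply_comp c' = apply_comp c' \<circ> apply_comp c"
  using assms by (cases c; cases c') (auto simp: fun_eq_iff apply_comp_def)

lemma fold_any:
  assumes "glayer n L" "distinct cs" "set cs = L"
  shows "fold apply_comp cs x = apply_layer L x"
proof -
  have fin: "finite L" using assms unfolding glayer_def by auto
  have "mset cs = mset (sorted_list_of_set L)"
    using assms fin by (subst set_eq_iff_mset_eq_distinct[symmetric]) auto
  moreover have "\<And>c c'. c \<in> set cs \<Longrightarrow> c' \<in> set cs \<Longrightarrow> apply_comp c \<circ> apply_comp c' = apply_comp c' \<circ> apply_comp c"
  proof -
    fix c c' assume "c \<in> set cs" "c' \<in> set cs"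
    then show "apply_comp c \<circ> apply_comp c' = apply_comp c' \<circ> apply_comp c"
      using assms(1,3) comp_commute unfolding glayer_def by (cases "c = c'") auto
  qed
  ultimately have "fold apply_comp cs = fold apply_comp (sorted_list_of_set L)"
    by (rule fold_multiset_equiv[rotated])
  then show ?thesis unfolding apply_layer_def by simp
qed

lemma fold_untouched:
  "(\<forall>c\<in>set cs. k \<noteq> fst c \<and> k \<noteq> snd c) \<Longrightarrow> fold apply_comp cs x k = x k"
  by (induction cs arbitrary: x) (auto simp: apply_comp_def split: prod.splits)

lemma layer_ordered:
  assumes "glayer n L" "(i,j) \<in> L" "i < j"
  shows "apply_layer L x i \<le> apply_layer L x j"
proof -
  have fin: "finite L" using assms unfolding glayer_def by auto
  let ?cs = "(i,j) # sorted_list_of_set (L - {(i,j)})"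
  have "apply_layer L x = fold apply_comp ?cs x"
    using fold_any[OF assms(1), of ?cs] fin assms(2) by (simp add: insert_absorb)
  also have "\<dots> = fold apply_comp (sorted_list_of_set (L - {(i,j)})) (apply_comp (i,j) x)" by simp
  finally have e: "apply_layer L x = \<dots>" .
  have unt: "\<forall>c\<in>set (sorted_list_of_set (L - {(i,j)})). k \<noteq> fst c \<and> k \<noteq> snd c" if "k = i \<or> k = j" for k
    using assms(1,2) that fin unfolding glayer_def by fastforce
  show ?thesis unfolding e using fold_untouched[OF unt] assms(3)
    by (auto simp: apply_comp_def)
qed

lemma fold_fixed: "(\<forall>c\<in>set cs. apply_comp c y = y) \<Longrightarrow> fold apply_comp cs y = y"
  by (induction cs) auto

lemma apply_net_Cons: "apply_net (L # N) x = apply_net N (apply_layer L x)"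
  by (simp add: apply_net_def)

lemma apply_net_append: "apply_net (A @ B) x = apply_net B (apply_net A x)"
  by (simp add: apply_net_def)

lemma apply_net_concat: "apply_net G x = fold apply_comp (concat (map sorted_list_of_set G)) x"
  by (induction G arbitrary: x) (auto simp: apply_net_def apply_layer_def)

lemma layer_redundant:
  assumes "is_layer n L1" "is_layer n L2"
  shows "apply_layer L2 (apply_layer L1 x) = apply_layer (L2 - L1) (apply_layer L1 x)"
proof -
  let ?y = "apply_layer L1 x"
  have g1: "glayer n L1" and g2: "glayer n L2" using assms is_layer_glayer by auto
  have fin: "finite L2" using assms unfolding is_layer_def by auto
  let ?cs = "sorted_list_of_set (L2 \<inter> L1) @ sorted_list_of_set (L2 - L1)"
  have "apply_layer L2 ?y = fold apply_comp ?cs ?y"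
    using fold_any[OF g2, of ?cs] fin by (simp add: Int_Diff_disjoint Int_Diff_Un)
  also have "fold apply_comp (sorted_list_of_set (L2 \<inter> L1)) ?y = ?y"
  proof (rule fold_fixed, rule ballI)
    fix c assume "c \<in> set (sorted_list_of_set (L2 \<inter> L1))"
    then have c: "c \<in> L1" using fin by auto
    obtain i j where cij: "c = (i,j)" by (cases c)
    have "i < j" using c cij assms(1) unfolding is_layer_def by auto
    then have "?y i \<le> ?y j" using layer_ordered[OF g1] c cij by auto
    then show "apply_comp c ?y = ?y" unfolding cij apply_comp_def
      by (auto simp: fun_eq_iff)
  qed
  then have "fold apply_comp ?cs ?y = apply_layer (L2 - L1) ?y"
    by (simp add: apply_layer_def)
  finally show ?thesis .
qed



lemma isperm_comp: "isperm n a \<Longrightarrow> isperm n b \<Longrightarrow> isperm n (a \<circ> b)"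
  unfolding isperm_def by (auto intro: bij_comp)

lemma isperm_inv: "isperm n a \<Longrightarrow> isperm n (inv a)"
  unfolding isperm_def
  by (metis bij_betw_inv_into bij_inv_eq_iff)

lemma isperm_sw: assumes "a \<in> {1..n}" "b \<in> {1..n}" shows "isperm n (sw a b)"
proof -
  have inv: "sw a b \<circ> sw a b = id" unfolding sw_def fun_eq_iff o_def id_def by auto
  then have "bij (sw a b)" by (rule o_bij[OF inv])
  then show ?thesis using assms unfolding isperm_def by (auto simp: sw_def)
qed

lemma isperm_id: "isperm n id" unfolding isperm_def by auto

lemma bij_comp_inv: "bij p \<Longrightarrow> p \<circ> inv p = id" by (meson bij_is_surj surj_iff)
lemma bij_inv_comp: "bij p \<Longrightarrow> inv p \<circ> p = id" by (meson bij_is_inj inj_iff)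
lemma bij_f_inv: "bij p \<Longrightarrow> p (inv p a) = a" by (simp add: bij_is_surj surj_f_inv_f)

lemma comp_perm1:
  assumes "inj p"
  shows "apply_comp (pm p c) z \<circ> p = apply_comp c (z \<circ> p)"
  using assms by (cases c) (auto simp: fun_eq_iff apply_comp_def pm_def inj_eq)

lemma fold_perm1:
  assumes "inj p"
  shows "fold apply_comp (map (pm p) cs) z \<circ> p = fold apply_comp cs (z \<circ> p)"
  using assms by (induction cs arbitrary: z) (auto simp: comp_perm1)

lemma fold_perm2:
  assumes "bij p"
  shows "fold apply_comp (map (pm p) cs) z = fold apply_comp cs (z \<circ> p) \<circ> inv p"
proof -
  have e: "fold apply_comp (map (pm p) cs) z \<circ> p = fold apply_comp cs (z \<circ> p)"
    by (rule fold_perm1[OF bij_is_inj[OF assms]])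
  have "fold apply_comp (map (pm p) cs) z = (fold apply_comp (map (pm p) cs) z \<circ> p) \<circ> inv p"
    by (simp only: comp_assoc bij_comp_inv[OF assms] comp_id)
  also have "\<dots> = fold apply_comp cs (z \<circ> p) \<circ> inv p"
    by (rule arg_cong[where f="\<lambda>f. f \<circ> inv p"], rule e)
  finally show ?thesis .
qed

lemma inj_on_pm: assumes "inj p" shows "inj_on (pm p) A"
proof (rule inj_onI)
  fix x y assume "pm p x = pm p y"
  then have "p (fst x) = p (fst y)" "p (snd x) = p (snd y)" by (auto simp: pm_def)
  then show "x = y" using injD[OF assms] by (metis prod.expand)
qed

lemma glayer_pm:
  assumes "glayer n L" "isperm n p"
  shows "glayer n (pm p ` L)"
proof -
  have ip: "inj p" using assms(2) unfolding isperm_def bij_def by auto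
  show ?thesis using assms unfolding glayer_def isperm_def
    by (auto simp: pm_def inj_eq[OF ip])
qed

lemma layer_perm:
  assumes "glayer n L" "isperm n p"
  shows "apply_layer (pm p ` L) z = apply_layer L (z \<circ> p) \<circ> inv p"
proof -
  have b: "bij p" using assms(2) unfolding isperm_def by auto
  have fin: "finite L" using assms unfolding glayer_def by auto
  have "apply_layer (pm p ` L) z = fold apply_comp (map (pm p) (sorted_list_of_set L)) z"
    by (rule fold_any[OF glayer_pm[OF assms], symmetric])
       (use fin inj_on_pm[OF bij_is_inj[OF b]] in \<open>auto simp: distinct_map\<close>)
  then show ?thesis using fold_perm2[OF b] unfolding apply_layer_def by simp
qed

definition gnet :: "nat \<Rightarrow> network \<Rightarrow> bool" where
  "gnet n G \<longleftrightarrow> (\<forall>L\<in>set G. glayer n L)"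

lemma is_network_gnet: "is_network n C \<Longrightarrow> gnet n C"
  unfolding is_network_def gnet_def using is_layer_glayer by auto

lemma perm_net_pm: "perm_net p C = map (\<lambda>L. pm p ` L) C"
  unfolding perm_net_def pm_def by (simp add: case_prod_beta')

lemma net_perm:
  assumes "gnet n S" "isperm n p"
  shows "gnet n (perm_net p S) \<and> length (perm_net p S) = length S \<and>
         net_size (perm_net p S) = net_size S \<and>
         (\<forall>w. apply_net (perm_net p S) w = apply_net S (w \<circ> p) \<circ> inv p)"
  using assms
proof (induction S)
  case Nil
  then show ?case
    using assms(2) by (simp add: gnet_def perm_net_def net_size_def apply_net_def isperm_def
        bij_f_inv fun_eq_iff)
next
  case (Cons L S)
  have b: "bij p" using assms(2) unfolding isperm_def by auto
  have gL: "glayer n L" and gS: "gnet n S" using Cons.prems by (auto simp: gnet_def)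
  have IH: "gnet n (perm_net p S) \<and> length (perm_net p S) = length S \<and>
         net_size (perm_net p S) = net_size S \<and>
         (\<forall>w. apply_net (perm_net p S) w = apply_net S (w \<circ> p) \<circ> inv p)"
    using Cons.IH gS assms(2) by blast
  have c: "card (pm p ` L) = card L" using card_image[OF inj_on_pm[OF bij_is_inj[OF b]]] by auto
  have pc: "perm_net p (L # S) = pm p ` L # perm_net p S" by (simp add: perm_net_pm)
  have sem: "apply_net (perm_net p (L # S)) w = apply_net (L # S) (w \<circ> p) \<circ> inv p" for w
  proof -
    have "apply_net (perm_net p (L # S)) w = apply_net (perm_net p S) (apply_layer L (w \<circ> p) \<circ> inv p)"
      unfolding pc apply_net_Cons layer_perm[OF gL assms(2)] ..
    also have "\<dots> = apply_net S (apply_layer L (w \<circ> p) \<circ> inv p \<circ> p) \<circ> inv p" using IH by simp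
    also have "apply_layer L (w \<circ> p) \<circ> inv p \<circ> p = apply_layer L (w \<circ> p)"
      using b by (simp add: comp_assoc bij_is_inj)
    finally show ?thesis by (simp add: apply_net_Cons comp_def)
  qed
  have g1: "gnet n (perm_net p (L # S))" using IH glayer_pm[OF gL assms(2)] unfolding pc
    by (simp add: gnet_def)
  have g2: "length (perm_net p (L # S)) = length (L # S)" by (simp add: perm_net_def)
  have g3: "net_size (perm_net p (L # S)) = net_size (L # S)" using IH c unfolding pc
    by (simp add: net_size_def)
  show ?case by (intro conjI g1 g2 g3 allI sem)
qed



fun ut :: "(nat \<Rightarrow> nat) \<Rightarrow> comp list \<Rightarrow> comp list" where
  "ut s [] = []"
| "ut s ((a,b)#cs) = (if s b < s a then (s b, s a) # ut (sw (s a) (s b) \<circ> s) cs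
                      else (s a, s b) # ut s cs)"

definition mm :: "(nat \<Rightarrow> nat) \<Rightarrow> comp \<Rightarrow> comp" where
  "mm s c = (min (s (fst c)) (s (snd c)), max (s (fst c)) (s (snd c)))"

lemma ut_eq: "untangle_seq (map (pm s) cs) = ut s cs"
proof (induction cs arbitrary: s)
  case Nil then show ?case by simp
next
  case (Cons c cs)
  obtain a b where c: "c = (a,b)" by (cases c)
  have m: "map (\<lambda>(c, d). (sw (s a) (s b) c, sw (s a) (s b) d)) (map (pm s) cs)
        = map (pm (sw (s a) (s b) \<circ> s)) cs" by (simp add: pm_def)
  have "untangle_seq (map (pm s) (c#cs)) = untangle_seq ((s a, s b) # map (pm s) cs)"
    by (simp add: c pm_def)
  also have "\<dots> = (if s b < s a then (s b, s a) # untangle_seq (map (pm (sw (s a) (s b) \<circ> s)) cs)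
       else (s a, s b) # untangle_seq (map (pm s) cs))"
    by (simp only: untangle_seq.simps m)
  also have "\<dots> = ut s (c#cs)" using Cons.IH by (simp add: c comp_def)
  finally show ?case .
qed

lemma comp_flip: "a \<noteq> b \<Longrightarrow> apply_comp (a,b) x = apply_comp (b,a) x \<circ> sw a b"
  by (auto simp: apply_comp_def fun_eq_iff sw_def min.commute max.commute)

lemma isperm_range: "isperm n s \<Longrightarrow> k \<in> {1..n} \<Longrightarrow> s k \<in> {1..n}"
  unfolding isperm_def by blast

lemma isperm_inj: "isperm n s \<Longrightarrow> inj s"
  unfolding isperm_def bij_def by blast

lemma ut_sem:
  assumes "isperm n s" "\<forall>c\<in>set cs. fst c \<in> {1..n} \<and> snd c \<in> {1..n}"
  shows "\<exists>t. isperm n t \<and> (\<forall>x. fold apply_comp (map (pm s) cs) x = fold apply_comp (ut s cs) x \<circ> t)"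
  using assms
proof (induction cs arbitrary: s)
  case Nil then show ?case using isperm_id by (auto intro!: exI[of _ id])
next
  case (Cons c cs)
  obtain a b where c: "c = (a,b)" by (cases c)
  have ra: "s a \<in> {1..n}" and rb: "s b \<in> {1..n}"
    using Cons.prems isperm_range c by auto
  have rcs: "\<forall>c\<in>set cs. fst c \<in> {1..n} \<and> snd c \<in> {1..n}" using Cons.prems(2) by simp
  show ?case
  proof (cases "s b < s a")
    case True
    let ?q = "sw (s a) (s b)"
    have pq: "isperm n ?q" using isperm_sw[OF ra rb] .
    have pqs: "isperm n (?q \<circ> s)" using isperm_comp[OF pq Cons.prems(1)] .
    obtain t where t: "isperm n t" and
      tt: "\<forall>x. fold apply_comp (map (pm (?q \<circ> s)) cs) x = fold apply_comp (ut (?q \<circ> s) cs) x \<circ> t"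
      using Cons.IH[OF pqs rcs] by blast
    have mm: "map (pm ?q) (map (pm s) cs) = map (pm (?q \<circ> s)) cs" by (simp add: pm_def)
    have "fold apply_comp (map (pm s) (c # cs)) x = fold apply_comp (ut s (c # cs)) x \<circ> (t \<circ> ?q)" for x
    proof -
      have "fold apply_comp (map (pm s) (c # cs)) x = fold apply_comp (map (pm s) cs) (apply_comp (s a, s b) x)"
        by (simp add: c pm_def)
      also have "apply_comp (s a, s b) x = apply_comp (s b, s a) x \<circ> ?q"
        using True by (intro comp_flip) auto
      also have "fold apply_comp (map (pm s) cs) (apply_comp (s b, s a) x \<circ> ?q)
          = fold apply_comp (map (pm ?q) (map (pm s) cs)) (apply_comp (s b, s a) x) \<circ> ?q"
        using fold_perm1[OF isperm_inj[OF pq]] by metis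
      also have "\<dots> = fold apply_comp (ut (?q \<circ> s) cs) (apply_comp (s b, s a) x) \<circ> (t \<circ> ?q)"
        by (simp only: mm tt[rule_format] comp_assoc)
      also have "\<dots> = fold apply_comp (ut s (c # cs)) x \<circ> (t \<circ> ?q)"
        using True by (simp add: c)
      finally show ?thesis .
    qed
    then show ?thesis using isperm_comp[OF t pq] by blast
  next
    case False
    obtain t where t: "isperm n t" and
      tt: "\<forall>x. fold apply_comp (map (pm s) cs) x = fold apply_comp (ut s cs) x \<circ> t"
      using Cons.IH[OF Cons.prems(1) rcs] by blast
    have "fold apply_comp (map (pm s) (c # cs)) x = fold apply_comp (ut s (c # cs)) x \<circ> t" for x
      using tt False by (simp add: c pm_def)
    then show ?thesis using t by blast
  qed
qed

lemma ut_chunk: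
  assumes "isperm n s" "distinct l"
    "\<forall>c\<in>set l. fst c \<in> {1..n} \<and> snd c \<in> {1..n} \<and> fst c \<noteq> snd c"
    "\<forall>c\<in>set l. \<forall>c'\<in>set l. c \<noteq> c' \<longrightarrow> {fst c, snd c} \<inter> {fst c', snd c'} = {}"
  shows "\<exists>s'. isperm n s' \<and> ut s (l @ rest) = map (mm s) l @ ut s' rest"
  using assms
proof (induction l arbitrary: s)
  case Nil then show ?case by auto
next
  case (Cons c l)
  obtain a b where c: "c = (a,b)" by (cases c)
  have ra: "s a \<in> {1..n}" and rb: "s b \<in> {1..n}"
    using Cons.prems isperm_range c by auto
  have ab: "s a \<noteq> s b" using Cons.prems(3) c isperm_inj[OF Cons.prems(1)] by (auto simp: inj_eq)
  have p2: "distinct l" using Cons.prems(2) by simp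
  have p3: "\<forall>c\<in>set l. fst c \<in> {1..n} \<and> snd c \<in> {1..n} \<and> fst c \<noteq> snd c" using Cons.prems(3) by simp
  have p4: "\<forall>c\<in>set l. \<forall>c'\<in>set l. c \<noteq> c' \<longrightarrow> {fst c, snd c} \<inter> {fst c', snd c'} = {}"
    using Cons.prems(4) by simp
  have disj: "\<forall>c'\<in>set l. fst c' \<noteq> a \<and> fst c' \<noteq> b \<and> snd c' \<noteq> a \<and> snd c' \<noteq> b"
    using Cons.prems(2,4) c by fastforce
  show ?case
  proof (cases "s b < s a")
    case True
    let ?q = "sw (s a) (s b)"
    have pq: "isperm n ?q" using isperm_sw[OF ra rb] .
    have pqs: "isperm n (?q \<circ> s)" using isperm_comp[OF pq Cons.prems(1)] .
    obtain s' where s': "isperm n s'" "ut (?q \<circ> s) (l @ rest) = map (mm (?q \<circ> s)) l @ ut s' rest"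
      using Cons.IH[OF pqs p2 p3 p4] by blast
    have "map (mm (?q \<circ> s)) l = map (mm s) l"
    proof (rule map_cong[OF refl])
      fix c' assume "c' \<in> set l"
      then have "s (fst c') \<noteq> s a \<and> s (fst c') \<noteq> s b \<and> s (snd c') \<noteq> s a \<and> s (snd c') \<noteq> s b"
        using disj isperm_inj[OF Cons.prems(1)] by (auto simp: inj_eq)
      then show "mm (?q \<circ> s) c' = mm s c'" by (simp add: mm_def sw_def)
    qed
    then show ?thesis using s' True by (auto simp: c mm_def)
  next
    case False
    obtain s' where s': "isperm n s'" "ut s (l @ rest) = map (mm s) l @ ut s' rest"
      using Cons.IH[OF Cons.prems(1) p2 p3 p4] by blast
    then show ?thesis using False ab by (auto simp: c mm_def)
  qed
qed

lemma mm_chan: "{fst (mm s c), snd (mm s c)} = s ` {fst c, snd c}"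
  by (auto simp: mm_def min_def max_def)

lemma layer_mm:
  assumes "glayer n L" "isperm n s"
  shows "is_layer n (mm s ` L) \<and> inj_on (mm s) L"
proof -
  have ij: "inj s" using isperm_inj[OF assms(2)] .
  have inj: "inj_on (mm s) L"
  proof (rule inj_onI, rule ccontr)
    fix c c' assume cc: "c \<in> L" "c' \<in> L" "mm s c = mm s c'" "c \<noteq> c'"
    then have "{fst c, snd c} \<inter> {fst c', snd c'} = {}" using assms(1) unfolding glayer_def by blast
    moreover have "s ` {fst c, snd c} = s ` {fst c', snd c'}" using cc(3) mm_chan by metis
    then have "{fst c, snd c} = {fst c', snd c'}" using ij by (metis inj_image_eq_iff)
    ultimately show False by auto
  qed
  have "is_layer n (mm s ` L)"
    unfolding is_layer_def
  proof (intro conjI ballI)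
    show "finite (mm s ` L)" using assms(1) unfolding glayer_def by auto
  next
    fix p assume "p \<in> mm s ` L"
    then obtain c where c: "c \<in> L" "p = mm s c" by auto
    have "fst c \<in> {1..n}" "snd c \<in> {1..n}" "fst c \<noteq> snd c" using c assms(1) unfolding glayer_def by auto
    then have "s (fst c) \<in> {1..n}" "s (snd c) \<in> {1..n}" "s (fst c) \<noteq> s (snd c)"
      using isperm_range[OF assms(2)] ij by (auto simp: inj_eq)
    then show "case p of (i, j) \<Rightarrow> 1 \<le> i \<and> i < j \<and> j \<le> n" using c by (auto simp: mm_def)
  next
    fix p p' assume "p \<in> mm s ` L" "p' \<in> mm s ` L"
    then obtain c c' where c: "c \<in> L" "p = mm s c" "c' \<in> L" "p' = mm s c'" by auto
    show "p \<noteq> p' \<longrightarrow> {fst p, snd p} \<inter> {fst p', snd p'} = {}"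
    proof
      assume "p \<noteq> p'"
      then have "c \<noteq> c'" using c by auto
      then have "{fst c, snd c} \<inter> {fst c', snd c'} = {}" using c assms(1) unfolding glayer_def by blast
      then have "s ` {fst c, snd c} \<inter> s ` {fst c', snd c'} = {}" using ij by (metis image_Int image_empty)
      then show "{fst p, snd p} \<inter> {fst p', snd p'} = {}" using c mm_chan by metis
    qed
  qed
  then show ?thesis using inj by auto
qed

lemma ut_struct:
  assumes "gnet n G" "isperm n s"
  shows "(\<forall>L\<in>set (map set (regroup (map card G) (ut s (concat (map sorted_list_of_set G))))). is_layer n L)
    \<and> map card (map set (regroup (map card G) (ut s (concat (map sorted_list_of_set G))))) = map card G
    \<and> (\<forall>x. apply_net (map set (regroup (map card G) (ut s (concat (map sorted_list_of_set G))))) x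
           = fold apply_comp (ut s (concat (map sorted_list_of_set G))) x)"
  using assms
proof (induction G arbitrary: s)
  case Nil then show ?case by (simp add: apply_net_def)
next
  case (Cons L G)
  have gL: "glayer n L" and gG: "gnet n G" using Cons.prems(1) by (auto simp: gnet_def)
  have fin: "finite L" using gL unfolding glayer_def by auto
  let ?l = "sorted_list_of_set L"
  let ?rest = "concat (map sorted_list_of_set G)"
  have h1: "\<forall>c\<in>set ?l. fst c \<in> {1..n} \<and> snd c \<in> {1..n} \<and> fst c \<noteq> snd c"
    using gL fin unfolding glayer_def by fastforce
  have h2: "\<forall>c\<in>set ?l. \<forall>c'\<in>set ?l. c \<noteq> c' \<longrightarrow> {fst c, snd c} \<inter> {fst c', snd c'} = {}"
    using gL unfolding glayer_def set_sorted_list_of_set[OF fin] by blast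
  obtain s' where s': "isperm n s'" "ut s (?l @ ?rest) = map (mm s) ?l @ ut s' ?rest"
    using ut_chunk[OF Cons.prems(2) _ h1 h2, of ?rest] fin by auto
  have IH: "(\<forall>L\<in>set (map set (regroup (map card G) (ut s' ?rest))). is_layer n L)
    \<and> map card (map set (regroup (map card G) (ut s' ?rest))) = map card G
    \<and> (\<forall>x. apply_net (map set (regroup (map card G) (ut s' ?rest))) x = fold apply_comp (ut s' ?rest) x)"
    using Cons.IH[OF gG s'(1)] .
  have len: "length (map (mm s) ?l) = card L" by simp
  have rg: "regroup (map card (L # G)) (ut s (concat (map sorted_list_of_set (L # G))))
        = map (mm s) ?l # regroup (map card G) (ut s' ?rest)"
    using s'(2) len by simp
  have lm: "is_layer n (mm s ` L)" "inj_on (mm s) L" using layer_mm[OF gL Cons.prems(2)] by auto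
  have st: "set (map (mm s) ?l) = mm s ` L" using fin by simp
  have cd: "card (mm s ` L) = card L" using card_image[OF lm(2)] .
  have ap: "apply_layer (mm s ` L) x = fold apply_comp (map (mm s) ?l) x" for x
    by (rule fold_any[OF is_layer_glayer[OF lm(1)], symmetric])
       (use fin lm(2) in \<open>auto simp: distinct_map inj_on_subset\<close>)
  show ?case unfolding rg using IH lm(1) cd ap s'(2) st
    by (simp add: apply_net_Cons)
qed

lemma pm_id: "pm id = id" by (auto simp: pm_def fun_eq_iff)

lemma untangle_main:
  assumes "gnet n G"
  shows "is_network n (untangle_net G) \<and> length (untangle_net G) = length G
     \<and> net_size (untangle_net G) = net_size G
     \<and> (\<exists>t. isperm n t \<and> (\<forall>x. apply_net G x = apply_net (untangle_net G) x \<circ> t))"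
proof -
  let ?cs = "concat (map sorted_list_of_set G)"
  have u: "untangle_seq ?cs = ut id ?cs" using ut_eq[of id ?cs] by (simp add: pm_id)
  have pid: "map (pm id) ?cs = ?cs" by (simp add: pm_id)
  have S: "(\<forall>L\<in>set (untangle_net G). is_layer n L) \<and> map card (untangle_net G) = map card G
     \<and> (\<forall>x. apply_net (untangle_net G) x = fold apply_comp (ut id ?cs) x)"
    using ut_struct[OF assms isperm_id] unfolding untangle_net_def u by simp
  have r: "\<forall>c\<in>set ?cs. fst c \<in> {1..n} \<and> snd c \<in> {1..n}"
    using assms unfolding gnet_def glayer_def by fastforce
  obtain t where t: "isperm n t" "\<forall>x. fold apply_comp ?cs x = fold apply_comp (ut id ?cs) x \<circ> t"
    using ut_sem[OF isperm_id r] pid by auto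
  have "length (untangle_net G) = length G" using S by (metis length_map)
  moreover have "net_size (untangle_net G) = net_size G" using S by (simp add: net_size_def)
  ultimately show ?thesis using S t apply_net_concat[of G] unfolding is_network_def by auto
qed



lemma fix_mono:
  assumes "is_network n N" "\<forall>i j. i \<le> j \<longrightarrow> y i \<le> y j"
  shows "apply_net N y = y"
  using assms(1)
proof (induction N)
  case Nil then show ?case by (simp add: apply_net_def)
next
  case (Cons L N)
  have lL: "is_layer n L" and nN: "is_network n N" using Cons.prems by (auto simp: is_network_def)
  have fin: "finite L" using lL unfolding is_layer_def by auto
  have "apply_layer L y = y" unfolding apply_layer_def
  proof (rule fold_fixed, rule ballI)
    fix c assume "c \<in> set (sorted_list_of_set L)"
    then have c: "c \<in> L" using fin by auto
    obtain i j where cij: "c = (i,j)" by (cases c)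
    have "i < j" using c cij lL unfolding is_layer_def by auto
    then have "y i \<le> y j" using assms(2) by auto
    then show "apply_comp c y = y" unfolding cij apply_comp_def by (auto simp: fun_eq_iff)
  qed
  then show ?case using Cons.IH[OF nN] by (simp add: apply_net_Cons)
qed

lemma strict_id:
  assumes r: "\<forall>k\<in>{1..n}. s k \<in> {1..(n::nat)}"
    and m: "\<forall>i\<in>{1..n}. \<forall>j\<in>{1..n}. i < j \<longrightarrow> s i < s j"
    and k: "k \<in> {1..n}"
  shows "s k = k"
proof -
  have A: "k \<in> {1..n} \<Longrightarrow> k \<le> s k" for k
  proof (induction k)
    case 0 then show ?case by simp
  next
    case (Suc k)
    show ?case
    proof (cases "k = 0")
      case True
      have "s (Suc k) \<in> {1..n}" using r Suc.prems by blast
      then show ?thesis using True by simp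
    next
      case False
      then have kk: "k \<in> {1..n}" using Suc.prems by simp
      then have "k \<le> s k" using Suc.IH by blast
      moreover have "s k < s (Suc k)" using m kk Suc.prems by blast
      ultimately show ?thesis by simp
    qed
  qed
  have B: "m < n \<longrightarrow> s (n - m) \<le> n - m" for m
  proof (induction m)
    case 0 then show ?case using r by auto
  next
    case (Suc m)
    show ?case
    proof
      assume "Suc m < n"
      then have "s (n - Suc m) < s (n - m)" using m by auto
      then show "s (n - Suc m) \<le> n - Suc m" using Suc \<open>Suc m < n\<close> by auto
    qed
  qed
  have "s k \<le> k" using B[of "n - k"] k by auto
  then show ?thesis using A[OF k] by simp
qed

lemma fp_sort:
  assumes "is_network n N" "isperm n s"
    "\<forall>y i j. 1 \<le> i \<longrightarrow> i \<le> j \<longrightarrow> j \<le> n \<longrightarrow> apply_net N y (s i) \<le> apply_net N y (s j)"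
  shows "sorting_network n N"
proof -
  let ?y = "\<lambda>k. int k"
  have fy: "apply_net N ?y = ?y" by (rule fix_mono[OF assms(1)]) auto
  have inj: "inj s" using isperm_inj[OF assms(2)] .
  have m: "\<forall>i\<in>{1..n}. \<forall>j\<in>{1..n}. i < j \<longrightarrow> s i < s j"
  proof (intro ballI impI)
    fix i j assume "i \<in> {1..n}" "j \<in> {1..n}" "i < j"
    then have "int (s i) \<le> int (s j)" using assms(3) fy by (metis atLeastAtMost_iff less_imp_le_nat)
    moreover have "s i \<noteq> s j" using inj \<open>i < j\<close> by (metis injD less_irrefl_nat)
    ultimately show "s i < s j" by auto
  qed
  have r: "\<forall>k\<in>{1..n}. s k \<in> {1..n}" using isperm_range[OF assms(2)] by auto
  have sid: "\<And>k. k \<in> {1..n} \<Longrightarrow> s k = k" using strict_id[OF r m] by auto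
  show ?thesis unfolding sorting_network_def
  proof (intro conjI assms(1) allI impI)
    fix y i j assume "1 \<le> i" "i \<le> j" "j \<le> n"
    then have "apply_net N y (s i) \<le> apply_net N y (s j)" using assms(3) by blast
    then show "apply_net N y i \<le> apply_net N y j" using sid[of i] sid[of j] \<open>1 \<le> i\<close> \<open>i \<le> j\<close> \<open>j \<le> n\<close> by auto
  qed
qed


definition rr :: "nat \<Rightarrow> nat \<Rightarrow> nat" where
  "rr n k = (if k \<in> {1..n} then n + 1 - k else k)"

lemma rr_inv[simp]: "rr n (rr n k) = k"
  unfolding rr_def by auto

lemma rr_range: "k \<in> {1..n} \<Longrightarrow> rr n k \<in> {1..n}"
  unfolding rr_def by auto

lemma rr_inj: "inj (rr n)"
  by (metis injI rr_inv)

definition rf :: "nat \<Rightarrow> comp \<Rightarrow> comp" where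
  "rf n c = (rr n (snd c), rr n (fst c))"

lemma comp_reflect:
  assumes "i \<noteq> j"
  shows "apply_comp (rf n (i,j)) x = (\<lambda>k. - apply_comp (i,j) (\<lambda>m. - x (rr n m)) (rr n k))"
proof (rule ext)
  fix k
  have d: "rr n i \<noteq> rr n j" using assms rr_inj by (metis rr_inv)
  show "apply_comp (rf n (i,j)) x k = - apply_comp (i,j) (\<lambda>m. - x (rr n m)) (rr n k)"
  proof (cases "k = rr n j")
    case True then show ?thesis using d assms by (simp add: apply_comp_def rf_def)
  next
    case False
    note F = False
    show ?thesis
    proof (cases "k = rr n i")
      case True then show ?thesis using d assms F by (simp add: apply_comp_def rf_def)
    next
      case False
      then have "rr n k \<noteq> i" "rr n k \<noteq> j" using F by auto
      then show ?thesis using F False by (simp add: apply_comp_def rf_def)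
    qed
  qed
qed

lemma fold_reflect:
  assumes "\<forall>c\<in>set cs. fst c \<noteq> snd c"
  shows "fold apply_comp (map (rf n) cs) x = (\<lambda>k. - fold apply_comp cs (\<lambda>m. - x (rr n m)) (rr n k))"
  using assms
proof (induction cs arbitrary: x)
  case Nil then show ?case by simp
next
  case (Cons c cs)
  obtain i j where c: "c = (i,j)" by (cases c)
  have ij: "i \<noteq> j" using Cons.prems c by auto
  let ?x' = "apply_comp (rf n c) x"
  have e: "(\<lambda>m. - ?x' (rr n m)) = apply_comp c (\<lambda>m. - x (rr n m))"
    unfolding c comp_reflect[OF ij] by simp
  have "fold apply_comp (map (rf n) (c # cs)) x = fold apply_comp (map (rf n) cs) ?x'" by simp
  also have "\<dots> = (\<lambda>k. - fold apply_comp cs (\<lambda>m. - ?x' (rr n m)) (rr n k))"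
    using Cons.IH Cons.prems by simp
  also have "\<dots> = (\<lambda>k. - fold apply_comp (c # cs) (\<lambda>m. - x (rr n m)) (rr n k))"
    unfolding e by simp
  finally show ?case .
qed

lemma layer_rf:
  assumes "is_layer n L"
  shows "is_layer n (rf n ` L) \<and> inj_on (rf n) L"
proof -
  have inj: "inj_on (rf n) L"
    by (rule inj_onI) (metis prod.expand rf_def rr_inv snd_conv fst_conv)
  have ch: "{fst (rf n c), snd (rf n c)} = rr n ` {fst c, snd c}" for c
    by (auto simp: rf_def)
  have "is_layer n (rf n ` L)"
    unfolding is_layer_def
  proof (intro conjI ballI)
    show "finite (rf n ` L)" using assms unfolding is_layer_def by auto
  next
    fix p assume "p \<in> rf n ` L"
    then obtain c where c: "c \<in> L" "p = rf n c" by auto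
    obtain i j where cij: "c = (i,j)" by (cases c)
    have "1 \<le> i" "i < j" "j \<le> n" using c cij assms unfolding is_layer_def by auto
    then show "case p of (i, j) \<Rightarrow> 1 \<le> i \<and> i < j \<and> j \<le> n"
      using c cij by (auto simp: rf_def rr_def)
  next
    fix p p' assume "p \<in> rf n ` L" "p' \<in> rf n ` L"
    then obtain c c' where c: "c \<in> L" "p = rf n c" "c' \<in> L" "p' = rf n c'" by auto
    show "p \<noteq> p' \<longrightarrow> {fst p, snd p} \<inter> {fst p', snd p'} = {}"
    proof
      assume "p \<noteq> p'"
      then have "c \<noteq> c'" using c by auto
      then have "{fst c, snd c} \<inter> {fst c', snd c'} = {}" using c assms unfolding is_layer_def by blast
      then have "rr n ` {fst c, snd c} \<inter> rr n ` {fst c', snd c'} = {}"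
        using rr_inj by (metis image_Int image_empty)
      then show "{fst p, snd p} \<inter> {fst p', snd p'} = {}" using c ch by metis
    qed
  qed
  then show ?thesis using inj by auto
qed

lemma reflect_net_rf:
  assumes "is_network n C"
  shows "reflect_net n C = map (\<lambda>L. rf n ` L) C"
  unfolding reflect_net_def
proof (rule map_cong[OF refl])
  fix L assume "L \<in> set C"
  then have lL: "is_layer n L" using assms unfolding is_network_def by auto
  show "(\<lambda>(i, j). (n - j + 1, n - i + 1)) ` L = rf n ` L"
  proof (rule image_cong[OF refl])
    fix c assume "c \<in> L"
    then show "(case c of (i, j) \<Rightarrow> (n - j + 1, n - i + 1)) = rf n c"
      using lL unfolding is_layer_def by (auto simp: rf_def rr_def)
  qed
qed

lemma net_reflect:
  assumes "is_network n C"
  shows "is_network n (reflect_net n C) \<and> length (reflect_net n C) = length C \<and>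
    net_size (reflect_net n C) = net_size C \<and>
    (\<forall>x. apply_net (reflect_net n C) x = (\<lambda>k. - apply_net C (\<lambda>m. - x (rr n m)) (rr n k)))"
  using assms
proof (induction C)
  case Nil then show ?case by (simp add: reflect_net_def is_network_def net_size_def apply_net_def)
next
  case (Cons L C)
  have lL: "is_layer n L" and nC: "is_network n C" using Cons.prems by (auto simp: is_network_def)
  have fin: "finite L" using lL unfolding is_layer_def by auto
  have IH: "is_network n (reflect_net n C) \<and> length (reflect_net n C) = length C \<and>
    net_size (reflect_net n C) = net_size C \<and>
    (\<forall>x. apply_net (reflect_net n C) x = (\<lambda>k. - apply_net C (\<lambda>m. - x (rr n m)) (rr n k)))"
    using Cons.IH[OF nC] .
  have rc: "reflect_net n (L # C) = rf n ` L # reflect_net n C"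
    using reflect_net_rf[OF Cons.prems] reflect_net_rf[OF nC] by simp
  have lm: "is_layer n (rf n ` L)" "inj_on (rf n) L" using layer_rf[OF lL] by auto
  have ne: "\<forall>c\<in>set (sorted_list_of_set L). fst c \<noteq> snd c" using lL fin unfolding is_layer_def by auto
  have al: "apply_layer (rf n ` L) x = (\<lambda>k. - apply_layer L (\<lambda>m. - x (rr n m)) (rr n k))" for x
  proof -
    have "apply_layer (rf n ` L) x = fold apply_comp (map (rf n) (sorted_list_of_set L)) x"
      by (rule fold_any[OF is_layer_glayer[OF lm(1)], symmetric])
         (use fin lm(2) in \<open>auto simp: distinct_map\<close>)
    then show ?thesis using fold_reflect[OF ne] by (simp add: apply_layer_def)
  qed
  have sem: "apply_net (reflect_net n (L # C)) x = (\<lambda>k. - apply_net (L # C) (\<lambda>m. - x (rr n m)) (rr n k))" for x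
  proof -
    have e: "(\<lambda>m. - apply_layer (rf n ` L) x (rr n m)) = apply_layer L (\<lambda>m. - x (rr n m))"
      unfolding al by simp
    show ?thesis unfolding rc apply_net_Cons using IH e by simp
  qed
  have g1: "is_network n (reflect_net n (L # C))" using IH lm(1) unfolding rc by (simp add: is_network_def)
  have g2: "length (reflect_net n (L # C)) = length (L # C)" by (simp add: reflect_net_def)
  have g3: "net_size (reflect_net n (L # C)) = net_size (L # C)" using IH card_image[OF lm(2)] unfolding rc
    by (simp add: net_size_def)
  show ?case by (intro conjI g1 g2 g3 allI sem)
qed

lemma reflect_sorting:
  assumes "sorting_network n C"
  shows "sorting_network n (reflect_net n C)"
proof -
  have nC: "is_network n C" using assms unfolding sorting_network_def by auto
  note R = net_reflect[OF nC]
  show ?thesis unfolding sorting_network_def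
  proof (intro conjI allI impI)
    show "is_network n (reflect_net n C)" using R by auto
  next
    fix x i j assume ij: "1 \<le> i" "i \<le> j" "j \<le> (n::nat)"
    let ?z = "\<lambda>m. - (x::nat\<Rightarrow>int) (rr n m)"
    have "rr n j \<le> rr n i" "1 \<le> rr n j" "rr n i \<le> n" using ij by (auto simp: rr_def)
    then have "apply_net C ?z (rr n j) \<le> apply_net C ?z (rr n i)"
      using assms unfolding sorting_network_def by blast
    then show "apply_net (reflect_net n C) x i \<le> apply_net (reflect_net n C) x j"
      using R by simp
  qed
qed

lemma reflect_invol:
  assumes "is_network n C"
  shows "reflect_net n (reflect_net n C) = C"
proof -
  have "reflect_net n (reflect_net n C) = map (\<lambda>L. rf n ` rf n ` L) C"
    using reflect_net_rf[OF assms] reflect_net_rf[OF conjunct1[OF net_reflect[OF assms]]] by simp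
  also have "\<dots> = C"
  proof (rule map_idI)
    fix L show "rf n ` rf n ` L = L" by (simp add: image_image rf_def)
  qed
  finally show ?thesis .
qed



definition Qp :: "nat \<Rightarrow> nat \<Rightarrow> nat \<Rightarrow> network \<Rightarrow> bool" where
  "Qp n d s P \<longleftrightarrow> (\<exists>S. sorting_network n (P @ S) \<and> length (P @ S) \<le> d \<and> net_size (P @ S) \<le> s)"

lemma is_network_append: "is_network n (A @ B) \<longleftrightarrow> is_network n A \<and> is_network n B"
  by (auto simp: is_network_def)

lemma net_size_append: "net_size (A @ B) = net_size A + net_size B"
  by (simp add: net_size_def)

lemma Q_reflect:
  assumes "is_network n P" "Qp n d s P"
  shows "Qp n d s (reflect_net n P)"
proof -
  obtain S where S: "sorting_network n (P @ S)" "length (P @ S) \<le> d" "net_size (P @ S) \<le> s"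
    using assms(2) unfolding Qp_def by blast
  have nPS: "is_network n (P @ S)" using S(1) unfolding sorting_network_def by auto
  have e: "reflect_net n (P @ S) = reflect_net n P @ reflect_net n S" by (simp add: reflect_net_def)
  have "sorting_network n (reflect_net n P @ reflect_net n S)" using reflect_sorting[OF S(1)] e by simp
  moreover have "length (reflect_net n P @ reflect_net n S) \<le> d" "net_size (reflect_net n P @ reflect_net n S) \<le> s"
    using net_reflect[OF nPS] S e by auto
  ultimately show ?thesis unfolding Qp_def by blast
qed

lemma transfer:
  assumes nA: "is_network n A" and nB: "is_network n B" and pa: "isperm n a" and pb: "isperm n b"
    and len: "length A = length B" and sz: "net_size A = net_size B"
    and rel: "\<forall>x. apply_net A x = apply_net B (x \<circ> a) \<circ> b"
    and Q: "Qp n d s A"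
  shows "Qp n d s B"
proof -
  obtain S where S: "sorting_network n (A @ S)" "length (A @ S) \<le> d" "net_size (A @ S) \<le> s"
    using Q unfolding Qp_def by blast
  have nS: "is_network n S" using S(1) unfolding sorting_network_def is_network_append by auto
  let ?G = "perm_net b S"
  have NP: "gnet n ?G" "length ?G = length S" "net_size ?G = net_size S"
     "\<forall>w. apply_net ?G w = apply_net S (w \<circ> b) \<circ> inv b"
    using net_perm[OF is_network_gnet[OF nS] pb] by auto
  let ?N = "untangle_net ?G"
  have UM: "is_network n ?N" "length ?N = length ?G" "net_size ?N = net_size ?G"
    using untangle_main[OF NP(1)] by auto
  obtain t where t: "isperm n t" "\<forall>x. apply_net ?G x = apply_net ?N x \<circ> t"
    using untangle_main[OF NP(1)] by blast
  have bb: "bij b" and ba: "bij a" using pa pb unfolding isperm_def by auto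
  have key: "apply_net (B @ ?N) y ((t \<circ> b) k) = apply_net (A @ S) (y \<circ> inv a) k" for y k
  proof -
    let ?x = "y \<circ> inv a"
    have xa: "?x \<circ> a = y" by (rule ext) (simp add: inv_f_f[OF bij_is_inj[OF ba]])
    have hB: "apply_net B y \<circ> b = apply_net A ?x" using rel xa by simp
    have "apply_net (B @ ?N) y (t (b k)) = apply_net ?N (apply_net B y) (t (b k))"
      by (simp add: apply_net_append)
    also have "\<dots> = apply_net ?G (apply_net B y) (b k)" using t(2) by simp
    also have "\<dots> = apply_net S (apply_net B y \<circ> b) (inv b (b k))" using NP(4) by simp
    also have "\<dots> = apply_net S (apply_net A ?x) k" using hB inv_f_f[OF bij_is_inj[OF bb]] by simp
    also have "\<dots> = apply_net (A @ S) ?x k" by (simp add: apply_net_append)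
    finally show ?thesis by simp
  qed
  have srt: "sorting_network n (B @ ?N)"
  proof (rule fp_sort[OF _ isperm_comp[OF t(1) pb]])
    show "is_network n (B @ ?N)" using nB UM(1) by (simp add: is_network_append)
  next
    show "\<forall>y i j. 1 \<le> i \<longrightarrow> i \<le> j \<longrightarrow> j \<le> n \<longrightarrow>
      apply_net (B @ ?N) y ((t \<circ> b) i) \<le> apply_net (B @ ?N) y ((t \<circ> b) j)"
      using S(1) unfolding key sorting_network_def by blast
  qed
  have "length (B @ ?N) \<le> d" "net_size (B @ ?N) \<le> s"
    using S(2,3) UM NP len sz by (auto simp: net_size_append)
  then show ?thesis using srt unfolding Qp_def by blast
qed

lemma perm_ext:
  assumes "bij_betw p {1..n} {1..n}"
  shows "isperm n (\<lambda>k. if k \<in> {1..n} then p k else k)"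
proof -
  let ?q = "\<lambda>k. if k \<in> {1..n} then p k else k"
  have io: "inj_on p {1..n}" and im: "p ` {1..n} = {1..n}" using assms unfolding bij_betw_def by auto
  have inj: "inj ?q"
  proof (rule injI)
    fix x y assume eq: "?q x = ?q y"
    have px: "x \<in> {1..n} \<Longrightarrow> p x \<in> {1..n}" and py: "y \<in> {1..n} \<Longrightarrow> p y \<in> {1..n}"
      using im by blast+
    show "x = y"
    proof (cases "x \<in> {1..n}"; cases "y \<in> {1..n}")
      assume a1: "x \<in> {1..n}" and a2: "y \<in> {1..n}"
      have qx: "?q x = p x" using a1 by (simp only: if_True if_False)
      have qy: "?q y = p y" using a2 by (simp only: if_True if_False)
      have "p x = p y" using eq unfolding qx qy .
      then show ?thesis using io a1 a2 by (meson inj_onD)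
    next
      assume a1: "x \<in> {1..n}" and a2: "y \<notin> {1..n}"
      have qx: "?q x = p x" using a1 by (simp only: if_True if_False)
      have qy: "?q y = y" using a2 by (simp only: if_True if_False)
      have "p x = y" using eq unfolding qx qy .
      then show ?thesis using px a1 a2 by blast
    next
      assume a1: "x \<notin> {1..n}" and a2: "y \<in> {1..n}"
      have qx: "?q x = x" using a1 by (simp only: if_True if_False)
      have qy: "?q y = p y" using a2 by (simp only: if_True if_False)
      have "x = p y" using eq unfolding qx qy .
      then show ?thesis using py a1 a2 by blast
    next
      assume a1: "x \<notin> {1..n}" and a2: "y \<notin> {1..n}"
      have qx: "?q x = x" using a1 by (simp only: if_True if_False)
      have qy: "?q y = y" using a2 by (simp only: if_True if_False)
      show ?thesis using eq unfolding qx qy .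
    qed
  qed
  have surj: "surj ?q"
  proof -
    have "y \<in> range ?q" for y
    proof (cases "y \<in> {1..n}")
      case True
      then obtain x where "x \<in> {1..n}" "p x = y" using im by (metis imageE)
      then show ?thesis by (metis (mono_tags, lifting) rangeI)
    next
      case False then show ?thesis by (metis (mono_tags, lifting) rangeI)
    qed
    then show ?thesis by blast
  qed
  have "\<forall>k. (?q k \<in> {1..n}) = (k \<in> {1..n})" using im by auto
  then show ?thesis using inj surj unfolding isperm_def bij_def by blast
qed

lemma perm_net_ext:
  assumes "is_network n C"
  shows "perm_net p C = perm_net (\<lambda>k. if k \<in> {1..n} then p k else k) C"
  unfolding perm_net_def
proof (rule map_cong[OF refl])
  fix L assume "L \<in> set C"
  then have lL: "is_layer n L" using assms unfolding is_network_def by auto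
  show "(\<lambda>(i, j). (p i, p j)) ` L = (\<lambda>(i, j). ((\<lambda>k. if k \<in> {1..n} then p k else k) i, (\<lambda>k. if k \<in> {1..n} then p k else k) j)) ` L"
  proof (rule image_cong[OF refl])
    fix c assume "c \<in> L"
    then show "(case c of (i, j) \<Rightarrow> (p i, p j)) = (case c of (i, j) \<Rightarrow> ((\<lambda>k. if k \<in> {1..n} then p k else k) i, (\<lambda>k. if k \<in> {1..n} then p k else k) j))"
      using lL unfolding is_layer_def by auto
  qed
qed

lemma sym_Q:
  assumes "sym_step n C C'"
  shows "Qp n d s C \<longleftrightarrow> Qp n d s C'"
proof -
  have nC: "is_network n C" and nC': "is_network n C'"
    using assms unfolding sym_step_def T_set_def by auto
  consider (perm) p where "bij_betw p {1..n} {1..n}" "C' = untangle_net (perm_net p C)"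
    | (refl) "C' = reflect_net n C"
    using assms unfolding sym_step_def by blast
  then show ?thesis
  proof cases
    case refl
    have "C = reflect_net n C'" using reflect_invol[OF nC] refl by simp
    then show ?thesis using Q_reflect[OF nC] Q_reflect[OF nC'] refl by metis
  next
    case perm
    define q where "q = (\<lambda>k. if k \<in> {1..n} then p k else k)"
    have pq: "isperm n q" using perm_ext[OF perm(1)] unfolding q_def .
    have bq: "bij q" using pq unfolding isperm_def by auto
    let ?G = "perm_net q C"
    have C'G: "C' = untangle_net ?G" using perm(2) perm_net_ext[OF nC] unfolding q_def by simp
    have NP: "gnet n ?G" "length ?G = length C" "net_size ?G = net_size C"
       "\<forall>w. apply_net ?G w = apply_net C (w \<circ> q) \<circ> inv q"
      using net_perm[OF is_network_gnet[OF nC] pq] by auto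
    have UM: "length C' = length ?G" "net_size C' = net_size ?G"
      using untangle_main[OF NP(1)] C'G by auto
    obtain t where t: "isperm n t" "\<forall>x. apply_net ?G x = apply_net C' x \<circ> t"
      using untangle_main[OF NP(1)] C'G by blast
    have bt: "bij t" using t(1) unfolding isperm_def by auto
    have eq0: "apply_net C (y \<circ> q) (inv q k) = apply_net C' y (t k)" for y k
    proof -
      have "apply_net C (y \<circ> q) (inv q k) = apply_net ?G y k" using NP(4) by simp
      also have "\<dots> = apply_net C' y (t k)" using t(2) by simp
      finally show ?thesis .
    qed
    have R1: "\<forall>x. apply_net C x = apply_net C' (x \<circ> inv q) \<circ> (t \<circ> q)"
    proof (intro allI ext)
      fix x :: "nat \<Rightarrow> int" and k :: nat
      have xa: "(x \<circ> inv q) \<circ> q = x" by (rule ext) (simp add: inv_f_f[OF bij_is_inj[OF bq]])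
      have "apply_net C' (x \<circ> inv q) (t (q k)) = apply_net C ((x \<circ> inv q) \<circ> q) (inv q (q k))"
        using eq0[of "x \<circ> inv q" "q k"] by simp
      also have "\<dots> = apply_net C x k" unfolding xa using inv_f_f[OF bij_is_inj[OF bq]] by simp
      finally show "apply_net C x k = (apply_net C' (x \<circ> inv q) \<circ> (t \<circ> q)) k" by simp
    qed
    have R2: "\<forall>y. apply_net C' y = apply_net C (y \<circ> q) \<circ> (inv q \<circ> inv t)"
    proof (intro allI ext)
      fix y :: "nat \<Rightarrow> int" and k :: nat
      have "apply_net C (y \<circ> q) (inv q (inv t k)) = apply_net C' y (t (inv t k))"
        using eq0 by simp
      also have "\<dots> = apply_net C' y k" using bij_f_inv[OF bt] by simp
      finally show "apply_net C' y k = (apply_net C (y \<circ> q) \<circ> (inv q \<circ> inv t)) k" by simp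
    qed
    have "Qp n d s C \<Longrightarrow> Qp n d s C'"
      by (rule transfer[OF nC nC' isperm_inv[OF pq] isperm_comp[OF t(1) pq] _ _ R1])
         (use UM NP in auto)
    moreover have "Qp n d s C' \<Longrightarrow> Qp n d s C"
      by (rule transfer[OF nC' nC pq isperm_comp[OF isperm_inv[OF pq] isperm_inv[OF t(1)]] _ _ R2])
         (use UM NP in auto)
    ultimately show ?thesis by blast
  qed
qed



lemma id_not_sorting:
  assumes "n \<ge> 2" "\<forall>x. apply_net C x = x" "sorting_network n C"
  shows False
proof -
  let ?x = "\<lambda>k::nat. - int k"
  have "apply_net C ?x 1 \<le> apply_net C ?x 2" using assms(1,3) unfolding sorting_network_def by auto
  then show False using assms(2) by simp
qed

lemma apply_layer_empty: "apply_layer {} x = x"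
  by (simp add: apply_layer_def)

lemma is_layer_subset: "is_layer n L \<Longrightarrow> L' \<subseteq> L \<Longrightarrow> is_layer n L'"
  unfolding is_layer_def by (meson finite_subset subsetD)

lemma sort_eq:
  assumes "is_network n C'" "\<forall>x. apply_net C' x = apply_net C x" "sorting_network n C"
  shows "sorting_network n C'"
  using assms unfolding sorting_network_def by simp

lemma norm:
  assumes "n \<ge> 2"
  shows "sorting_network n C \<Longrightarrow> \<exists>C'. sorting_network n C' \<and> length C' \<le> max 2 (length C)
     \<and> net_size C' \<le> net_size C \<and> 2 \<le> length C' \<and> C' ! 1 \<noteq> {} \<and> C' ! 0 \<inter> C' ! 1 = {}"
proof (induction "length C" arbitrary: C rule: less_induct)
  case less
  have nC: "is_network n C" using less.prems unfolding sorting_network_def by auto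
  show ?case
  proof (cases C)
    case Nil
    have "\<forall>x. apply_net C x = x" using Nil by (simp add: apply_net_def)
    then show ?thesis using id_not_sorting[OF assms _ less.prems] by blast
  next
    case (Cons L1 C1)
    have l1: "is_layer n L1" using nC Cons by (simp add: is_network_def)
    show ?thesis
    proof (cases C1)
      case Nil
      show ?thesis
      proof (cases "L1 = {}")
        case True
        have "\<forall>x. apply_net C x = x" using Nil Cons True by (simp add: apply_net_def apply_layer_empty)
        then show ?thesis using id_not_sorting[OF assms _ less.prems] by blast
      next
        case False
        let ?C' = "[{}, L1]"
        have e: "\<forall>x. apply_net ?C' x = apply_net C x" using Nil Cons
          by (simp add: apply_net_def apply_layer_empty)
        have "is_network n ?C'" using l1 by (simp add: is_network_def is_layer_def)
        then have "sorting_network n ?C'" using sort_eq e less.prems by blast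
        moreover have "net_size ?C' \<le> net_size C" using Nil Cons by (simp add: net_size_def)
        ultimately show ?thesis using False by (intro exI[of _ ?C']) simp
      qed
    next
      case Cons2: (Cons L2 rest)
      have l2: "is_layer n L2" and nr: "is_network n rest" using nC Cons Cons2 by (auto simp: is_network_def)
      have fin2: "finite L2" using l2 unfolding is_layer_def by auto
      have red: "apply_layer L2 (apply_layer L1 x) = apply_layer (L2 - L1) (apply_layer L1 x)" for x
        using layer_redundant[OF l1 l2] .
      show ?thesis
      proof (cases "L2 - L1 = {}")
        case False
        let ?C' = "L1 # (L2 - L1) # rest"
        have e: "\<forall>x. apply_net ?C' x = apply_net C x" using Cons Cons2 red
          by (simp add: apply_net_Cons)
        have "is_network n ?C'" using l1 nr is_layer_subset[OF l2, of "L2 - L1"]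
          by (auto simp: is_network_def)
        then have "sorting_network n ?C'" using sort_eq e less.prems by blast
        moreover have "net_size ?C' \<le> net_size C" using Cons Cons2 card_mono[OF fin2, of "L2 - L1"]
          by (auto simp: net_size_def)
        ultimately show ?thesis using False Cons Cons2 by (intro exI[of _ ?C']) auto
      next
        case True
        let ?C'' = "L1 # rest"
        have e: "\<forall>x. apply_net ?C'' x = apply_net C x" using Cons Cons2 red True
          by (simp add: apply_net_Cons apply_layer_empty)
        have "is_network n ?C''" using l1 nr by (auto simp: is_network_def)
        then have s'': "sorting_network n ?C''" using sort_eq e less.prems by blast
        have "length ?C'' < length C" using Cons Cons2 by simp
        then obtain C' where C': "sorting_network n C'" "length C' \<le> max 2 (length ?C'')"
          "net_size C' \<le> net_size ?C''" "2 \<le> length C'" "C' ! 1 \<noteq> {}" "C' ! 0 \<inter> C' ! 1 = {}"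
          using less.hyps[OF _ s''] by blast
        have "net_size ?C'' \<le> net_size C" using Cons Cons2 by (simp add: net_size_def)
        moreover have "length ?C'' \<le> length C" using Cons Cons2 by simp
        ultimately show ?thesis using C' by (intro exI[of _ C']) auto
      qed
    qed
  qed
qed

theorem mainTheorem1:
  fixes n :: nat and R :: "network set"
  assumes "n \<ge> 3"
    and "is_representatives n R"
  shows "\<forall>d s. d \<ge> 2 \<longrightarrow>
     (\<exists>C. sorting_network n C \<and> depth C \<le> d \<and> net_size C \<le> s) \<longrightarrow>
     (\<exists>C. sorting_network n C \<and> depth C \<le> d \<and> net_size C \<le> s \<and>
          length C \<ge> 2 \<and> take 2 C \<in> R)"
proof (intro allI impI)
  fix d s :: nat
  assume d: "d \<ge> 2" and "\<exists>C. sorting_network n C \<and> depth C \<le> d \<and> net_size C \<le> s"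
  then obtain C where C: "sorting_network n C" "length C \<le> d" "net_size C \<le> s"
    unfolding depth_def by blast
  have n2: "n \<ge> 2" using assms(1) by simp
  obtain C0 where C0: "sorting_network n C0" "length C0 \<le> max 2 (length C)"
     "net_size C0 \<le> net_size C" "2 \<le> length C0" "C0 ! 1 \<noteq> {}" "C0 ! 0 \<inter> C0 ! 1 = {}"
    using norm[OF n2 C(1)] by blast
  let ?P0 = "take 2 C0"
  have nC0: "is_network n C0" using C0(1) unfolding sorting_network_def by auto
  have "is_network n ?P0" using nC0 unfolding is_network_def by (meson in_set_takeD)
  moreover have "length ?P0 = 2" using C0(4) by simp
  moreover have "?P0 ! 1 = C0 ! 1" "?P0 ! 0 = C0 ! 0" by simp_all
  ultimately have P0T: "?P0 \<in> T_set n" using C0(5,6) unfolding T_set_def by auto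
  have Q0: "Qp n d s ?P0" unfolding Qp_def
    using C0 C d by (intro exI[of _ "drop 2 C0"]) auto
  obtain P where P: "P \<in> R" "T_equiv n ?P0 P"
    using assms(2) P0T unfolding is_representatives_def by blast
  have "Qp n d s P"
    using P(2) Q0 unfolding T_equiv_def
  proof (induction rule: rtranclp_induct)
    case base then show ?case by simp
  next
    case (step y z)
    then show ?case using sym_Q unfolding symclp_def by blast
  qed
  then obtain S where S: "sorting_network n (P @ S)" "length (P @ S) \<le> d" "net_size (P @ S) \<le> s"
    unfolding Qp_def by blast
  have "P \<in> T_set n" using P(1) assms(2) unfolding is_representatives_def by auto
  then have lp: "length P = 2" unfolding T_set_def by auto
  then have "take 2 (P @ S) = P" by simp
  then show "\<exists>C. sorting_network n C \<and> depth C \<le> d \<and> net_size C \<le> s \<and> length C \<ge> 2 \<and> take 2 C \<in> R"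
    using S P(1) lp unfolding depth_def by (intro exI[of _ "P @ S"]) auto
qed

end
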